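(* Let $m\ge 1$ and let $\Omega\subset\mathbb{R}^m$ be a non-empty open set with $|\Omega|<\infty$. If $1\le p\le 2$, then $$F_p(\Omega)\le F_1(\Omega)^{1/p}\le 1.$$
   Context: For a non-empty open $\Omega\subset\mathbb{R}^m$ with $|\Omega|<\infty$, $\lambda_1(\Omega)=\inf_{\varphi\in H_0^1(\Omega)\setminus\{0\}}\int_\Omega|D\varphi|^2/\int_\Omega\varphi^2$, and $v_\Omega$ is the unique solution of $-\Delta v=1$, $v\in H_0^1(\Omega)$. For $1\le p<\infty$, $T_p(\Omega)=\|v_\Omega\|_{L^p(\Omega)}$ and $F_p(\Omega)=T_p(\Omega)\lambda_1(\Omega)/|\Omega|^{1/p}$. *)

theory Defs
  imports "HOL-Analysis.Analysis"
begin

text \<open>Domains are subsets of a Euclidean space 'a (playing the role of R^m, m = DIM('a) \<ge> 1).\<close>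

definition grad :: "('a::euclidean_space \<Rightarrow> real) \<Rightarrow> 'a \<Rightarrow> 'a" where
  "grad f x = (\<Sum>b\<in>Basis. frechet_derivative f (at x) b *\<^sub>R b)"

fun Ck :: "nat \<Rightarrow> ('a::euclidean_space \<Rightarrow> real) \<Rightarrow> bool" where
  "Ck 0 f = continuous_on UNIV f"
| "Ck (Suc k) f = (f differentiable_on UNIV \<and>
      (\<forall>b\<in>Basis. Ck k (\<lambda>x. frechet_derivative f (at x) b)))"

definition smooth_fun :: "('a::euclidean_space \<Rightarrow> real) \<Rightarrow> bool" where
  "smooth_fun f \<longleftrightarrow> (\<forall>k. Ck k f)"

definition test_fun :: "'a::euclidean_space set \<Rightarrow> ('a \<Rightarrow> real) \<Rightarrow> bool" where
  "test_fun \<Omega> \<phi> \<longleftrightarrow> smooth_fun \<phi> \<and> compact (closure {x. \<phi> x \<noteq> 0})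
      \<and> closure {x. \<phi> x \<noteq> 0} \<subseteq> \<Omega>"

text \<open>H^1_0(\<Omega>) as the closure of C_c^\<infinity>(\<Omega>) in the H^1 norm:
  \<open>H01 \<Omega> u G\<close> means u \<in> H^1_0(\<Omega>) with (weak) gradient G.\<close>
definition H01 :: "'a::euclidean_space set \<Rightarrow> ('a \<Rightarrow> real) \<Rightarrow> ('a \<Rightarrow> 'a) \<Rightarrow> bool" where
  "H01 \<Omega> u G \<longleftrightarrow>
     set_borel_measurable lebesgue \<Omega> u \<and> set_borel_measurable lebesgue \<Omega> G \<and>
     set_integrable lebesgue \<Omega> (\<lambda>x. (u x)\<^sup>2) \<and>
     set_integrable lebesgue \<Omega> (\<lambda>x. (norm (G x))\<^sup>2) \<and>
     (\<exists>\<phi>::nat \<Rightarrow> 'a \<Rightarrow> real. (\<forall>n. test_fun \<Omega> (\<phi> n)) \<and>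
        (\<lambda>n. LINT x:\<Omega>|lebesgue. (\<phi> n x - u x)\<^sup>2) \<longlonglongrightarrow> 0 \<and>
        (\<lambda>n. LINT x:\<Omega>|lebesgue. (norm (grad (\<phi> n) x - G x))\<^sup>2) \<longlonglongrightarrow> 0)"

definition lambda1 :: "'a::euclidean_space set \<Rightarrow> real" where
  "lambda1 \<Omega> = Inf {(LINT x:\<Omega>|lebesgue. (norm (G x))\<^sup>2) / (LINT x:\<Omega>|lebesgue. (u x)\<^sup>2) | u G.
      H01 \<Omega> u G \<and> \<not> (AE x in lebesgue. x \<in> \<Omega> \<longrightarrow> u x = 0)}"

text \<open>v is the (weak) solution of -\<Delta>v = 1, v \<in> H^1_0(\<Omega>), with gradient G.\<close>
definition torsion_fun :: "'a::euclidean_space set \<Rightarrow> ('a \<Rightarrow> real) \<Rightarrow> ('a \<Rightarrow> 'a) \<Rightarrow> bool" where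
  "torsion_fun \<Omega> v G \<longleftrightarrow> H01 \<Omega> v G \<and>
     (\<forall>\<phi>. test_fun \<Omega> \<phi> \<longrightarrow>
        (LINT x:\<Omega>|lebesgue. G x \<bullet> grad \<phi> x) = (LINT x:\<Omega>|lebesgue. \<phi> x))"

definition Tp :: "real \<Rightarrow> 'a::euclidean_space set \<Rightarrow> ('a \<Rightarrow> real) \<Rightarrow> real" where
  "Tp p \<Omega> v = (LINT x:\<Omega>|lebesgue. \<bar>v x\<bar> powr p) powr (1 / p)"

definition Fp :: "real \<Rightarrow> 'a::euclidean_space set \<Rightarrow> ('a \<Rightarrow> real) \<Rightarrow> real" where
  "Fp p \<Omega> v = Tp p \<Omega> v * lambda1 \<Omega> / (measure lebesgue \<Omega>) powr (1 / p)"

end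

theory Submission
  imports Defs
begin

lemma half_contra: "(c::real) \<le> X / 2 \<Longrightarrow> X < c + c \<Longrightarrow> False"
  by linarith

lemma half_contra2: "(c::real) \<le> X / 2 \<Longrightarrow> X < c \<Longrightarrow> 0 < c \<Longrightarrow> False"
  by linarith

lemma real_cs_aux:
  fixes c A B :: real
  assumes A: "A \<ge> 0" and B: "B \<ge> 0" and h: "\<And>t. t > 0 \<Longrightarrow> c \<le> (t * A + B / t) / 2"
  shows "c \<le> sqrt A * sqrt B"
proof (cases "A > 0 \<and> B > 0")
  case True
  define t where "t = sqrt B / sqrt A"
  have tp: "t > 0" using True by (simp add: t_def)
  have sA: "sqrt A * sqrt A = A" "sqrt B * sqrt B = B" using A B by simp_all
  have pA: "sqrt A > 0" using True by simp
  have "t * A = sqrt A * sqrt B"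
  proof -
    have "t * A = sqrt B / sqrt A * (sqrt A * sqrt A)" by (simp only: t_def sA(1))
    also have "\<dots> = sqrt A * sqrt B" using pA by (simp add: field_simps)
    finally show ?thesis .
  qed
  moreover have "B / t = sqrt A * sqrt B"
  proof -
    have "B / t = (sqrt B * sqrt B) / (sqrt B / sqrt A)" by (simp only: t_def sA(2))
    also have "\<dots> = sqrt A * sqrt B" using pA True by (simp add: field_simps)
    finally show ?thesis .
  qed
  ultimately show ?thesis using h[OF tp] by simp
next
  case False
  show ?thesis
  proof (rule ccontr)
    assume "\<not> c \<le> sqrt A * sqrt B"
    with False A B have cp: "c > 0" and AB: "A = 0 \<or> B = 0" by auto
    show False
    proof (cases "A = 0")
      case True
      have "B / c \<ge> 0" using cp B by simp
      then have "0 < B / c + 1" by linarith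
      from h[OF this] have "c \<le> (B / (B / c + 1)) / 2" using True by simp
      moreover have "B / (B / c + 1) < c + c"
      proof -
        have q: "0 \<le> B * c" "0 < c * (c * 2)" using cp B by simp_all
        show ?thesis using cp B apply (simp add: field_simps) using q by linarith
      qed
      ultimately show False by (rule half_contra)
    next
      case False
      then have "B = 0" using AB by simp
      have "c \<le> (c / (A + 1) * A) / 2" using h[of "c / (A + 1)"] cp A \<open>B = 0\<close> by simp
      moreover have "c / (A + 1) * A < c" using cp A by (simp add: field_simps)
      ultimately show False using cp by (rule half_contra2)
    qed
  qed
qed

lemma amgm_t:
  fixes a b t :: real
  assumes t: "t > 0"
  shows "\<bar>a * b\<bar> \<le> (t * a\<^sup>2 + b\<^sup>2 / t) / 2"
proof -
  have e: "(t*\<bar>a\<bar> - \<bar>b\<bar>)^2 = t^2*a^2 - 2*t*\<bar>a*b\<bar> + b^2"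
    using t by (simp add: power2_eq_square abs_mult algebra_simps)
  have "0 \<le> (t*\<bar>a\<bar> - \<bar>b\<bar>)^2" by simp
  then have i0: "2 * t * \<bar>a*b\<bar> \<le> t^2*a^2+b^2" using e by linarith
  then have i: "\<bar>a*b\<bar> * (2*t) \<le> t^2*a^2+b^2" by (simp add: mult_ac)
  have "(t * a\<^sup>2 + b\<^sup>2 / t) / 2 = (t^2*a^2+b^2)/(2*t)" using t by (simp add: field_simps power2_eq_square)
  then show ?thesis using i t by (simp add: pos_le_divide_eq)
qed

lemma int_cs:
  fixes f g :: "'a \<Rightarrow> real"
  assumes [measurable]: "f \<in> borel_measurable M" "g \<in> borel_measurable M"
    and fi: "integrable M (\<lambda>x. (f x)\<^sup>2)" and gi: "integrable M (\<lambda>x. (g x)\<^sup>2)"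
  shows "integrable M (\<lambda>x. f x * g x)"
    and "(\<integral>x. \<bar>f x * g x\<bar> \<partial>M) \<le> sqrt (\<integral>x. (f x)\<^sup>2 \<partial>M) * sqrt (\<integral>x. (g x)\<^sup>2 \<partial>M)"
proof -
  have sumi: "integrable M (\<lambda>x. (f x)\<^sup>2 + (g x)\<^sup>2)" using fi gi by simp
  show fgi: "integrable M (\<lambda>x. f x * g x)"
  proof (rule Bochner_Integration.integrable_bound[OF sumi])
    show "(\<lambda>x. f x * g x) \<in> borel_measurable M" by measurable
    show "AE x in M. norm (f x * g x) \<le> norm ((f x)\<^sup>2 + (g x)\<^sup>2)"
    proof (rule AE_I2)
      fix x
      have "\<bar>f x * g x\<bar> \<le> (1 * (f x)\<^sup>2 + (g x)\<^sup>2 / 1) / 2" by (rule amgm_t) simp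
      moreover have "0 \<le> (f x)\<^sup>2" "0 \<le> (g x)\<^sup>2" by simp_all
      ultimately show "norm (f x * g x) \<le> norm ((f x)\<^sup>2 + (g x)\<^sup>2)" by simp
    qed
  qed
  then have afgi: "integrable M (\<lambda>x. \<bar>f x * g x\<bar>)" by (rule integrable_abs)
  show "(\<integral>x. \<bar>f x * g x\<bar> \<partial>M) \<le> sqrt (\<integral>x. (f x)\<^sup>2 \<partial>M) * sqrt (\<integral>x. (g x)\<^sup>2 \<partial>M)"
  proof (rule real_cs_aux)
    show "0 \<le> (\<integral>x. (f x)\<^sup>2 \<partial>M)" "0 \<le> (\<integral>x. (g x)\<^sup>2 \<partial>M)" by simp_all
    fix t :: real assume t: "t > 0"
    have "(\<integral>x. \<bar>f x * g x\<bar> \<partial>M) \<le> (\<integral>x. (t * (f x)\<^sup>2 + (g x)\<^sup>2 / t) / 2 \<partial>M)"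
      by (rule integral_mono[OF afgi]) (use fi gi t amgm_t in auto)
    also have "\<dots> = (t * (\<integral>x. (f x)\<^sup>2 \<partial>M) + (\<integral>x. (g x)\<^sup>2 \<partial>M) / t) / 2"
      using fi gi by simp
    finally show "(\<integral>x. \<bar>f x * g x\<bar> \<partial>M) \<le> (t * (\<integral>x. (f x)\<^sup>2 \<partial>M) + (\<integral>x. (g x)\<^sup>2 \<partial>M) / t) / 2" .
  qed
qed

lemma bounded_outside_compact:
  fixes h :: "'a::topological_space \<Rightarrow> 'b::real_normed_vector"
  assumes c: "continuous_on UNIV h" and S: "compact S" and z: "\<And>x. x \<notin> S \<Longrightarrow> h x = 0"
  shows "\<exists>B. \<forall>x. norm (h x) \<le> B"
proof -
  have "compact (h ` S)" using c S by (meson compact_continuous_image continuous_on_subset subset_UNIV)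
  then have "bounded (h ` S)" by (rule compact_imp_bounded)
  then obtain B where B: "\<And>y. y \<in> h ` S \<Longrightarrow> norm y \<le> B" by (auto simp: bounded_iff)
  have "norm (h x) \<le> max B 0" for x
  proof (cases "x \<in> S")
    case True then show ?thesis using B by force
  next
    case False then show ?thesis using z by simp
  qed
  then show ?thesis by blast
qed

lemma test_fun_props:
  fixes \<phi> :: "'a::euclidean_space \<Rightarrow> real"
  assumes "test_fun \<Omega> \<phi>"
  shows "continuous_on UNIV \<phi>" "\<exists>B. \<forall>x. norm (\<phi> x) \<le> B"
    "continuous_on UNIV (grad \<phi>)" "\<exists>B. \<forall>x. norm (grad \<phi> x) \<le> B"
proof -
  define S where "S = closure {x. \<phi> x \<noteq> 0}"
  have sm: "smooth_fun \<phi>" and cS: "compact S" using assms by (auto simp: test_fun_def S_def)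
  have C0: "Ck 0 \<phi>" and C1: "Ck (Suc 0) \<phi>" using sm by (auto simp: smooth_fun_def)
  show cphi: "continuous_on UNIV \<phi>" using C0 by simp
  have z: "\<phi> x = 0" if "x \<notin> S" for x using that closure_subset[of "{x. \<phi> x \<noteq> 0}"] by (auto simp: S_def)
  show "\<exists>B. \<forall>x. norm (\<phi> x) \<le> B" by (rule bounded_outside_compact[OF cphi cS z])
  have diff: "\<phi> differentiable_on UNIV" and cd: "\<And>b. b \<in> Basis \<Longrightarrow> continuous_on UNIV (\<lambda>x. frechet_derivative \<phi> (at x) b)"
    using C1 by auto
  show cg: "continuous_on UNIV (grad \<phi>)"
    unfolding grad_def by (intro continuous_intros cd)
  have fz: "frechet_derivative \<phi> (at x) = (\<lambda>_. 0)" if "x \<notin> S" for x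
  proof -
    have "((\<lambda>_. 0::real) has_derivative (\<lambda>_. 0)) (at x)" by simp
    then have "(\<phi> has_derivative (\<lambda>_. 0)) (at x)"
      by (rule has_derivative_transform_within_open[where s="- S"]) (use that cS z in \<open>auto intro: compact_imp_closed\<close>)
    then show ?thesis by (metis frechet_derivative_at)
  qed
  have gz: "grad \<phi> x = 0" if "x \<notin> S" for x using fz[OF that] by (simp add: grad_def)
  show "\<exists>B. \<forall>x. norm (grad \<phi> x) \<le> B" by (rule bounded_outside_compact[OF cg cS gz])
qed

lemma sq_sum_le: "((x::real) + y)\<^sup>2 \<le> 2 * x\<^sup>2 + 2 * y\<^sup>2"
proof -
  have "0 \<le> (x - y)\<^sup>2" by simp
  then show ?thesis by (simp add: power2_eq_square algebra_simps)
qed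

lemma L2_diff:
  fixes f g :: "'a \<Rightarrow> 'b::euclidean_space"
  assumes [measurable]: "f \<in> borel_measurable M" "g \<in> borel_measurable M"
    and fi: "integrable M (\<lambda>x. (norm (f x))\<^sup>2)" and gi: "integrable M (\<lambda>x. (norm (g x))\<^sup>2)"
  shows "integrable M (\<lambda>x. (norm (f x - g x))\<^sup>2)"
proof (rule Bochner_Integration.integrable_bound)
  show "integrable M (\<lambda>x. 2 * (norm (f x))\<^sup>2 + 2 * (norm (g x))\<^sup>2)" using fi gi by simp
  show "(\<lambda>x. (norm (f x - g x))\<^sup>2) \<in> borel_measurable M" by measurable
  show "AE x in M. norm ((norm (f x - g x))\<^sup>2) \<le> norm (2 * (norm (f x))\<^sup>2 + 2 * (norm (g x))\<^sup>2)"
  proof (rule AE_I2)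
    fix x
    have "norm (f x - g x) \<le> norm (f x) + norm (g x)" by (rule norm_triangle_ineq4)
    then have "(norm (f x - g x))\<^sup>2 \<le> (norm (f x) + norm (g x))\<^sup>2" by (simp add: power_mono)
    also have "\<dots> \<le> 2 * (norm (f x))\<^sup>2 + 2 * (norm (g x))\<^sup>2" by (rule sq_sum_le)
    finally show "norm ((norm (f x - g x))\<^sup>2) \<le> norm (2 * (norm (f x))\<^sup>2 + 2 * (norm (g x))\<^sup>2)" by simp
  qed
qed

lemma L2_diff_real:
  fixes f g :: "'a \<Rightarrow> real"
  assumes [measurable]: "f \<in> borel_measurable M" "g \<in> borel_measurable M"
    and fi: "integrable M (\<lambda>x. (f x)\<^sup>2)" and gi: "integrable M (\<lambda>x. (g x)\<^sup>2)"
  shows "integrable M (\<lambda>x. (f x - g x)\<^sup>2)"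
  using L2_diff[of f M g] fi gi by simp

lemma open_sets_lebesgue: "open (S::'a::euclidean_space set) \<Longrightarrow> S \<in> sets lebesgue"
  by (metis borel_open sets_completionI_sets sets_lborel)

lemma set_int_N:
  fixes f :: "'a::euclidean_space \<Rightarrow> 'b::euclidean_space"
  assumes "\<Omega> \<in> sets lebesgue"
  shows "set_lebesgue_integral lebesgue \<Omega> f = integral\<^sup>L (lebesgue_on \<Omega>) f"
  using assms by (simp add: set_lebesgue_integral_def integral_restrict_space)

lemma set_integrable_N:
  fixes f :: "'a::euclidean_space \<Rightarrow> 'b::euclidean_space"
  assumes "\<Omega> \<in> sets lebesgue"
  shows "set_integrable lebesgue \<Omega> f \<longleftrightarrow> integrable (lebesgue_on \<Omega>) f"
  using assms by (simp add: set_integrable_def integrable_restrict_space)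

lemma set_measurable_N:
  fixes f :: "'a::euclidean_space \<Rightarrow> 'b::euclidean_space"
  assumes "\<Omega> \<in> sets lebesgue"
  shows "set_borel_measurable lebesgue \<Omega> f \<longleftrightarrow> f \<in> borel_measurable (lebesgue_on \<Omega>)"
  using assms by (simp add: set_borel_measurable_def borel_measurable_restrict_space_iff)

lemma test_fun_N:
  fixes \<phi> :: "'a::euclidean_space \<Rightarrow> real"
  assumes "test_fun \<Omega> \<phi>" and \<Omega>m: "\<Omega> \<in> lmeasurable"
  shows "\<phi> \<in> borel_measurable (lebesgue_on \<Omega>)" "integrable (lebesgue_on \<Omega>) (\<lambda>x. (\<phi> x)\<^sup>2)"
    "grad \<phi> \<in> borel_measurable (lebesgue_on \<Omega>)" "integrable (lebesgue_on \<Omega>) (\<lambda>x. (norm (grad \<phi> x))\<^sup>2)"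
proof -
  have fin: "finite_measure (lebesgue_on \<Omega>)" using \<Omega>m by (rule finite_measure_lebesgue_on)
  have \<Omega>s: "\<Omega> \<in> sets lebesgue" using \<Omega>m by (rule fmeasurableD)
  note P = test_fun_props[OF assms(1)]
  show m1[measurable]: "\<phi> \<in> borel_measurable (lebesgue_on \<Omega>)"
    by (rule continuous_imp_measurable_on_sets_lebesgue[OF continuous_on_subset[OF P(1)] \<Omega>s]) simp
  show m2[measurable]: "grad \<phi> \<in> borel_measurable (lebesgue_on \<Omega>)"
    by (rule continuous_imp_measurable_on_sets_lebesgue[OF continuous_on_subset[OF P(3)] \<Omega>s]) simp
  obtain B where B: "\<And>x. norm (\<phi> x) \<le> B" using P(2) by blast
  obtain C where C: "\<And>x. norm (grad \<phi> x) \<le> C" using P(4) by blast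
  show "integrable (lebesgue_on \<Omega>) (\<lambda>x. (\<phi> x)\<^sup>2)"
  proof (rule finite_measure.integrable_const_bound[OF fin])
    show "AE x in lebesgue_on \<Omega>. norm ((\<phi> x)\<^sup>2) \<le> B\<^sup>2"
      using B by (intro AE_I2) (simp, metis abs_ge_zero power2_abs power_mono)
  qed measurable
  show "integrable (lebesgue_on \<Omega>) (\<lambda>x. (norm (grad \<phi> x))\<^sup>2)"
  proof (rule finite_measure.integrable_const_bound[OF fin])
    show "AE x in lebesgue_on \<Omega>. norm ((norm (grad \<phi> x))\<^sup>2) \<le> C\<^sup>2"
      using C by (intro AE_I2) (simp add: power_mono)
  qed measurable
qed

lemma energy:
  fixes \<Omega> :: "'a::euclidean_space set" and v :: "'a \<Rightarrow> real" and G :: "'a \<Rightarrow> 'a"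
  assumes \<Omega>m: "\<Omega> \<in> lmeasurable" and tf: "torsion_fun \<Omega> v G"
  shows "v \<in> borel_measurable (lebesgue_on \<Omega>)" "integrable (lebesgue_on \<Omega>) (\<lambda>x. (v x)\<^sup>2)"
    "integrable (lebesgue_on \<Omega>) v" "integrable (lebesgue_on \<Omega>) (\<lambda>x. (norm (G x))\<^sup>2)"
    "integral\<^sup>L (lebesgue_on \<Omega>) (\<lambda>x. (norm (G x))\<^sup>2) = integral\<^sup>L (lebesgue_on \<Omega>) v"
proof -
  have fin: "finite_measure (lebesgue_on \<Omega>)" using \<Omega>m by (rule finite_measure_lebesgue_on)
  have \<Omega>s: "\<Omega> \<in> sets lebesgue" using \<Omega>m by (rule fmeasurableD)
  have H: "H01 \<Omega> v G" and weak: "\<And>\<phi>. test_fun \<Omega> \<phi> \<Longrightarrow>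
        (LINT x:\<Omega>|lebesgue. G x \<bullet> grad \<phi> x) = (LINT x:\<Omega>|lebesgue. \<phi> x)"
    using tf by (auto simp: torsion_fun_def)
  show vm[measurable]: "v \<in> borel_measurable (lebesgue_on \<Omega>)"
    using H \<Omega>s by (simp add: H01_def set_measurable_N)
  have Gm[measurable]: "G \<in> borel_measurable (lebesgue_on \<Omega>)"
    using H \<Omega>s by (simp add: H01_def set_measurable_N)
  show v2: "integrable (lebesgue_on \<Omega>) (\<lambda>x. (v x)\<^sup>2)"
    using H \<Omega>s by (simp add: H01_def set_integrable_N)
  show G2: "integrable (lebesgue_on \<Omega>) (\<lambda>x. (norm (G x))\<^sup>2)"
    using H \<Omega>s by (simp add: H01_def set_integrable_N)
  obtain \<phi> :: "nat \<Rightarrow> 'a \<Rightarrow> real" where t\<phi>: "\<And>n. test_fun \<Omega> (\<phi> n)"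
    and c1: "(\<lambda>n. LINT x:\<Omega>|lebesgue. (\<phi> n x - v x)\<^sup>2) \<longlonglongrightarrow> 0"
    and c2: "(\<lambda>n. LINT x:\<Omega>|lebesgue. (norm (grad (\<phi> n) x - G x))\<^sup>2) \<longlonglongrightarrow> 0"
    using H unfolding H01_def by blast
  have c1': "(\<lambda>n. integral\<^sup>L (lebesgue_on \<Omega>) (\<lambda>x. (\<phi> n x - v x)\<^sup>2)) \<longlonglongrightarrow> 0"
    using c1 by (simp add: set_int_N[OF \<Omega>s])
  have c2': "(\<lambda>n. integral\<^sup>L (lebesgue_on \<Omega>) (\<lambda>x. (norm (grad (\<phi> n) x - G x))\<^sup>2)) \<longlonglongrightarrow> 0"
    using c2 by (simp add: set_int_N[OF \<Omega>s])
  have one: "integrable (lebesgue_on \<Omega>) (\<lambda>x. ((\<lambda>_. 1::real) x)\<^sup>2)"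
    by (simp add: finite_measure.integrable_const[OF fin])
  show vi: "integrable (lebesgue_on \<Omega>) v"
    using int_cs(1)[OF vm _ v2 one] by simp
  define L where "L = sqrt (integral\<^sup>L (lebesgue_on \<Omega>) (\<lambda>x. ((\<lambda>_. 1::real) x)\<^sup>2))"
  note \<phi>m[measurable] = test_fun_N(1)[OF t\<phi> \<Omega>m]
  note \<phi>2 = test_fun_N(2)[OF t\<phi> \<Omega>m]
  note wm[measurable] = test_fun_N(3)[OF t\<phi> \<Omega>m]
  note w2 = test_fun_N(4)[OF t\<phi> \<Omega>m]
  have A: "\<bar>integral\<^sup>L (lebesgue_on \<Omega>) (\<phi> n) - integral\<^sup>L (lebesgue_on \<Omega>) v\<bar>
      \<le> sqrt (integral\<^sup>L (lebesgue_on \<Omega>) (\<lambda>x. (\<phi> n x - v x)\<^sup>2)) * L" for n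
  proof -
    have d1: "integrable (lebesgue_on \<Omega>) (\<lambda>x. (\<phi> n x - v x)\<^sup>2)"
      by (rule L2_diff_real[OF \<phi>m vm \<phi>2 v2])
    have dm: "(\<lambda>x. \<phi> n x - v x) \<in> borel_measurable (lebesgue_on \<Omega>)" by measurable
    have \<phi>i: "integrable (lebesgue_on \<Omega>) (\<phi> n)"
      using int_cs(1)[OF \<phi>m _ \<phi>2 one] by simp
    have di: "integrable (lebesgue_on \<Omega>) (\<lambda>x. (\<phi> n x - v x) * 1)"
      by (rule int_cs(1)[OF dm _ d1 one]) simp
    have "integral\<^sup>L (lebesgue_on \<Omega>) (\<phi> n) - integral\<^sup>L (lebesgue_on \<Omega>) v
        = integral\<^sup>L (lebesgue_on \<Omega>) (\<lambda>x. \<phi> n x - v x)"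
      using \<phi>i vi by simp
    then have "\<bar>integral\<^sup>L (lebesgue_on \<Omega>) (\<phi> n) - integral\<^sup>L (lebesgue_on \<Omega>) v\<bar>
        \<le> (\<integral>x. \<bar>(\<phi> n x - v x) * 1\<bar> \<partial>(lebesgue_on \<Omega>))"
      using integral_abs_bound[of "lebesgue_on \<Omega>" "\<lambda>x. \<phi> n x - v x"] by simp
    also have "\<dots> \<le> sqrt (integral\<^sup>L (lebesgue_on \<Omega>) (\<lambda>x. (\<phi> n x - v x)\<^sup>2)) * L"
      unfolding L_def by (rule int_cs(2)[OF dm _ d1 one]) simp
    finally show ?thesis .
  qed
  have B: "\<bar>integral\<^sup>L (lebesgue_on \<Omega>) (\<lambda>x. G x \<bullet> grad (\<phi> n) x) - integral\<^sup>L (lebesgue_on \<Omega>) (\<lambda>x. (norm (G x))\<^sup>2)\<bar>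
      \<le> sqrt (integral\<^sup>L (lebesgue_on \<Omega>) (\<lambda>x. (norm (G x))\<^sup>2))
        * sqrt (integral\<^sup>L (lebesgue_on \<Omega>) (\<lambda>x. (norm (grad (\<phi> n) x - G x))\<^sup>2))" for n
  proof -
    have d2: "integrable (lebesgue_on \<Omega>) (\<lambda>x. (norm (grad (\<phi> n) x - G x))\<^sup>2)"
      by (rule L2_diff[OF wm Gm w2 G2])
    have nGm: "(\<lambda>x. norm (G x)) \<in> borel_measurable (lebesgue_on \<Omega>)" by measurable
    have nwm: "(\<lambda>x. norm (grad (\<phi> n) x)) \<in> borel_measurable (lebesgue_on \<Omega>)" by measurable
    have ndm: "(\<lambda>x. norm (grad (\<phi> n) x - G x)) \<in> borel_measurable (lebesgue_on \<Omega>)" by measurable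
    have pi: "integrable (lebesgue_on \<Omega>) (\<lambda>x. norm (G x) * norm (grad (\<phi> n) x))"
      by (rule int_cs(1)[OF nGm nwm G2 w2])
    have Gwi: "integrable (lebesgue_on \<Omega>) (\<lambda>x. G x \<bullet> grad (\<phi> n) x)"
    proof (rule Bochner_Integration.integrable_bound[OF pi])
      show "(\<lambda>x. G x \<bullet> grad (\<phi> n) x) \<in> borel_measurable (lebesgue_on \<Omega>)" by measurable
      show "AE x in lebesgue_on \<Omega>. norm (G x \<bullet> grad (\<phi> n) x) \<le> norm (norm (G x) * norm (grad (\<phi> n) x))"
        by (intro AE_I2) (simp add: Cauchy_Schwarz_ineq2)
    qed
    have qi: "integrable (lebesgue_on \<Omega>) (\<lambda>x. norm (G x) * norm (grad (\<phi> n) x - G x))"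
      by (rule int_cs(1)[OF nGm ndm G2 d2])
    have "integral\<^sup>L (lebesgue_on \<Omega>) (\<lambda>x. G x \<bullet> grad (\<phi> n) x) - integral\<^sup>L (lebesgue_on \<Omega>) (\<lambda>x. (norm (G x))\<^sup>2)
        = integral\<^sup>L (lebesgue_on \<Omega>) (\<lambda>x. G x \<bullet> grad (\<phi> n) x - (norm (G x))\<^sup>2)"
      using Gwi G2 by simp
    also have "\<bar>\<dots>\<bar> \<le> (\<integral>x. \<bar>norm (G x) * norm (grad (\<phi> n) x - G x)\<bar> \<partial>(lebesgue_on \<Omega>))"
    proof (rule integral_abs_bound_integral)
      show "integrable (lebesgue_on \<Omega>) (\<lambda>x. G x \<bullet> grad (\<phi> n) x - (norm (G x))\<^sup>2)" using Gwi G2 by simp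
      show "integrable (lebesgue_on \<Omega>) (\<lambda>x. \<bar>norm (G x) * norm (grad (\<phi> n) x - G x)\<bar>)"
        using qi by (rule integrable_abs)
      fix x
      have "G x \<bullet> grad (\<phi> n) x - (norm (G x))\<^sup>2 = G x \<bullet> (grad (\<phi> n) x - G x)"
        by (simp add: inner_diff_right power2_norm_eq_inner)
      then show "\<bar>G x \<bullet> grad (\<phi> n) x - (norm (G x))\<^sup>2\<bar> \<le> \<bar>norm (G x) * norm (grad (\<phi> n) x - G x)\<bar>"
        by (simp add: Cauchy_Schwarz_ineq2)
    qed
    also have "\<dots> \<le> sqrt (integral\<^sup>L (lebesgue_on \<Omega>) (\<lambda>x. (norm (G x))\<^sup>2))
        * sqrt (integral\<^sup>L (lebesgue_on \<Omega>) (\<lambda>x. (norm (grad (\<phi> n) x - G x))\<^sup>2))"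
      by (rule int_cs(2)[OF nGm ndm G2 d2])
    finally show ?thesis .
  qed
  have lima: "(\<lambda>n. integral\<^sup>L (lebesgue_on \<Omega>) (\<phi> n)) \<longlonglongrightarrow> integral\<^sup>L (lebesgue_on \<Omega>) v"
  proof (rule LIM_zero_cancel, rule Lim_null_comparison)
    show "\<forall>\<^sub>F n in sequentially. norm (integral\<^sup>L (lebesgue_on \<Omega>) (\<phi> n) - integral\<^sup>L (lebesgue_on \<Omega>) v)
        \<le> sqrt (integral\<^sup>L (lebesgue_on \<Omega>) (\<lambda>x. (\<phi> n x - v x)\<^sup>2)) * L"
      using A by simp
    show "(\<lambda>n. sqrt (integral\<^sup>L (lebesgue_on \<Omega>) (\<lambda>x. (\<phi> n x - v x)\<^sup>2)) * L) \<longlonglongrightarrow> 0"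
      using tendsto_mult_left_zero[OF tendsto_real_sqrt[OF c1', unfolded real_sqrt_zero]] by simp
  qed
  have limb: "(\<lambda>n. integral\<^sup>L (lebesgue_on \<Omega>) (\<lambda>x. G x \<bullet> grad (\<phi> n) x)) \<longlonglongrightarrow> integral\<^sup>L (lebesgue_on \<Omega>) (\<lambda>x. (norm (G x))\<^sup>2)"
  proof (rule LIM_zero_cancel, rule Lim_null_comparison)
    show "\<forall>\<^sub>F n in sequentially. norm (integral\<^sup>L (lebesgue_on \<Omega>) (\<lambda>x. G x \<bullet> grad (\<phi> n) x) - integral\<^sup>L (lebesgue_on \<Omega>) (\<lambda>x. (norm (G x))\<^sup>2))
        \<le> sqrt (integral\<^sup>L (lebesgue_on \<Omega>) (\<lambda>x. (norm (G x))\<^sup>2))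
        * sqrt (integral\<^sup>L (lebesgue_on \<Omega>) (\<lambda>x. (norm (grad (\<phi> n) x - G x))\<^sup>2))"
      using B by simp
    show "(\<lambda>n. sqrt (integral\<^sup>L (lebesgue_on \<Omega>) (\<lambda>x. (norm (G x))\<^sup>2))
        * sqrt (integral\<^sup>L (lebesgue_on \<Omega>) (\<lambda>x. (norm (grad (\<phi> n) x - G x))\<^sup>2))) \<longlonglongrightarrow> 0"
      using tendsto_mult_right_zero[OF tendsto_real_sqrt[OF c2', unfolded real_sqrt_zero]] by simp
  qed
  have eq: "integral\<^sup>L (lebesgue_on \<Omega>) (\<lambda>x. G x \<bullet> grad (\<phi> n) x) = integral\<^sup>L (lebesgue_on \<Omega>) (\<phi> n)" for n
    using weak[OF t\<phi>[of n]] by (simp add: set_int_N[OF \<Omega>s])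
  show "integral\<^sup>L (lebesgue_on \<Omega>) (\<lambda>x. (norm (G x))\<^sup>2) = integral\<^sup>L (lebesgue_on \<Omega>) v"
    using limb lima unfolding eq by (rule LIMSEQ_unique)
qed

lemma set_int_sq_nonneg: "0 \<le> set_lebesgue_integral M S (\<lambda>x. (f x)\<^sup>2::real)"
  unfolding set_lebesgue_integral_def by (rule integral_nonneg_AE) simp

lemma pointwise_young:
  fixes y lam \<theta> :: real
  assumes y: "y \<ge> 0" and lam: "lam > 0" and t0: "0 \<le> \<theta>" and t1: "\<theta> \<le> 1"
  shows "lam powr \<theta> * y powr (1 + \<theta>) \<le> (1 - \<theta>) * y + \<theta> * (lam * y\<^sup>2)"
proof (cases "y = 0")
  case True then show ?thesis using t0 t1 by simp
next
  case False
  then have yp: "y > 0" using y by simp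
  have "y powr (1 - \<theta>) * (lam * y\<^sup>2) powr \<theta> \<le> (1 - \<theta>) * y + \<theta> * (lam * y\<^sup>2)"
    by (rule Youngs_inequality_0) (use t0 t1 yp lam in auto)
  moreover have "y powr (1 - \<theta>) * (lam * y\<^sup>2) powr \<theta> = lam powr \<theta> * y powr (1 + \<theta>)"
  proof -
    have "(lam * y\<^sup>2) powr \<theta> = lam powr \<theta> * (y powr 2) powr \<theta>"
      using lam yp by (simp add: powr_mult powr_numeral)
    also have "\<dots> = lam powr \<theta> * y powr (2 * \<theta>)" by (simp add: powr_powr)
    finally have "y powr (1 - \<theta>) * (lam * y\<^sup>2) powr \<theta> = lam powr \<theta> * (y powr (1 - \<theta>) * y powr (2 * \<theta>))"
      by simp
    also have "y powr (1 - \<theta>) * y powr (2 * \<theta>) = y powr (1 + \<theta>)"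
      by (simp add: powr_add[symmetric] add.commute)
    finally show ?thesis .
  qed
  ultimately show ?thesis by simp
qed

lemma powr_le_lin_sq:
  fixes y p :: real
  assumes y: "y \<ge> 0" and "1 \<le> p" "p \<le> 2"
  shows "y powr p \<le> y + y\<^sup>2"
proof (cases "y \<le> 1")
  case True
  have "y powr p = y powr (1 + (p - 1))" by simp
  also have "\<dots> = y powr 1 * y powr (p - 1)" by (rule powr_add)
  also have "\<dots> = y * y powr (p - 1)" using y by simp
  also have "\<dots> \<le> y * 1" using True y assms by (intro mult_left_mono powr_le1) auto
  finally have "y powr p \<le> y" by simp
  moreover have "0 \<le> y\<^sup>2" by simp
  ultimately show ?thesis by linarith
next
  case False
  then have "y powr p \<le> y powr 2" using assms by (intro powr_mono) auto
  then show ?thesis using y by (simp add: powr_numeral)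
qed

theorem theorem1:
  fixes \<Omega> :: "'a::euclidean_space set" and v :: "'a \<Rightarrow> real" and G :: "'a \<Rightarrow> 'a" and p :: real
  assumes "open \<Omega>" and "\<Omega> \<noteq> {}" and "emeasure lebesgue \<Omega> < \<infinity>"
    and "torsion_fun \<Omega> v G"
    and "1 \<le> p" and "p \<le> 2"
  shows "Fp p \<Omega> v \<le> (Fp 1 \<Omega> v) powr (1 / p) \<and> (Fp 1 \<Omega> v) powr (1 / p) \<le> 1"
proof -
  have \<Omega>s: "\<Omega> \<in> sets lebesgue" using assms(1) by (rule open_sets_lebesgue)
  have \<Omega>m: "\<Omega> \<in> lmeasurable" using \<Omega>s assms(3) by (simp add: fmeasurable_def)
  have fin: "finite_measure (lebesgue_on \<Omega>)" using \<Omega>m by (rule finite_measure_lebesgue_on)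
  note E = energy[OF \<Omega>m assms(4)]
  note vm[measurable] = E(1)
  have p0: "p > 0" using assms(5) by simp
  define N where "N = lebesgue_on \<Omega>"
  define A where "A = integral\<^sup>L N (\<lambda>x. \<bar>v x\<bar>)"
  define B where "B = integral\<^sup>L N (\<lambda>x. \<bar>v x\<bar> powr p)"
  define M where "M = measure lebesgue \<Omega>"
  define lam where "lam = lambda1 \<Omega>"
  have A0: "A \<ge> 0" unfolding A_def by (rule integral_nonneg_AE) simp
  have B0: "B \<ge> 0" unfolding B_def by (rule integral_nonneg_AE) simp
  have M0: "M \<ge> 0" unfolding M_def by simp
  have Tp1: "Tp 1 \<Omega> v = A"
    unfolding Tp_def A_def N_def set_int_N[OF \<Omega>s] using A0[unfolded A_def N_def] by simp
  have Tpp: "Tp p \<Omega> v = B powr (1 / p)"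
    unfolding Tp_def B_def N_def set_int_N[OF \<Omega>s] ..
  have F1: "Fp 1 \<Omega> v = A * lam / M"
    unfolding Fp_def Tp1 lam_def M_def using M0[unfolded M_def] by simp
  have Fpp: "Fp p \<Omega> v = B powr (1 / p) * lam / M powr (1 / p)"
    unfolding Fp_def Tpp lam_def M_def ..
  have vabs: "integrable N (\<lambda>x. \<bar>v x\<bar>)" unfolding N_def using E(3) by (rule integrable_abs)
  show ?thesis
  proof (cases "A = 0")
    case True
    then have "AE x in N. \<bar>v x\<bar> = 0"
      using integral_nonneg_eq_0_iff_AE[OF vabs] unfolding A_def by simp
    then have "AE x in N. \<bar>v x\<bar> powr p = 0" by eventually_elim simp
    then have "B = 0" unfolding B_def by (rule integral_eq_zero_AE)
    then show ?thesis using True F1 Fpp p0 by simp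
  next
    case False
    then have Ap: "A > 0" using A0 by simp
    have nz: "\<not> (AE x in lebesgue. x \<in> \<Omega> \<longrightarrow> v x = 0)"
    proof
      assume "AE x in lebesgue. x \<in> \<Omega> \<longrightarrow> v x = 0"
      then have "AE x in N. v x = 0" unfolding N_def using \<Omega>s by (simp add: AE_restrict_space_iff)
      then have "AE x in N. \<bar>v x\<bar> = 0" by eventually_elim simp
      then have "A = 0" unfolding A_def by (rule integral_eq_zero_AE)
      then show False using Ap by simp
    qed
    have v2p: "integral\<^sup>L N (\<lambda>x. (v x)\<^sup>2) > 0"
    proof (rule ccontr)
      assume "\<not> integral\<^sup>L N (\<lambda>x. (v x)\<^sup>2) > 0"
      moreover have "integral\<^sup>L N (\<lambda>x. (v x)\<^sup>2) \<ge> 0" by (rule integral_nonneg_AE) simp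
      ultimately have "integral\<^sup>L N (\<lambda>x. (v x)\<^sup>2) = 0" by simp
      then have "AE x in N. (v x)\<^sup>2 = 0"
        using integral_nonneg_eq_0_iff_AE[of N "\<lambda>x. (v x)\<^sup>2"] E(2) unfolding N_def by simp
      then have "AE x in N. \<bar>v x\<bar> = 0" by eventually_elim simp
      then have "A = 0" unfolding A_def by (rule integral_eq_zero_AE)
      then show False using Ap by simp
    qed
    define S where "S = {(LINT x:\<Omega>|lebesgue. (norm (G x))\<^sup>2) / (LINT x:\<Omega>|lebesgue. (u x)\<^sup>2) | u G.
      H01 \<Omega> u G \<and> \<not> (AE x in lebesgue. x \<in> \<Omega> \<longrightarrow> u x = 0)}"
    have lamS: "lam = Inf S" unfolding lam_def S_def lambda1_def ..
    have H: "H01 \<Omega> v G" using assms(4) by (simp add: torsion_fun_def)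
    have qS: "integral\<^sup>L N (\<lambda>x. (norm (G x))\<^sup>2) / integral\<^sup>L N (\<lambda>x. (v x)\<^sup>2) \<in> S"
      unfolding S_def N_def set_int_N[OF \<Omega>s, symmetric] using H nz by blast
    have Snn: "\<forall>s\<in>S. 0 \<le> s" unfolding S_def by (auto intro!: divide_nonneg_nonneg set_int_sq_nonneg)
    have bdd: "bdd_below S" using Snn by (auto simp: bdd_below_def)
    have lam0: "lam \<ge> 0" unfolding lamS using qS Snn by (intro cInf_greatest) auto
    have lamq: "lam \<le> integral\<^sup>L N (\<lambda>x. (norm (G x))\<^sup>2) / integral\<^sup>L N (\<lambda>x. (v x)\<^sup>2)"
      unfolding lamS using qS bdd by (rule cInf_lower)
    have vA: "integral\<^sup>L N v \<le> A" unfolding A_def N_def using E(3) vabs[unfolded N_def]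
      by (intro integral_mono) auto
    have key0: "lam * integral\<^sup>L N (\<lambda>x. (v x)\<^sup>2) \<le> A"
    proof -
      have "lam * integral\<^sup>L N (\<lambda>x. (v x)\<^sup>2) \<le> integral\<^sup>L N (\<lambda>x. (norm (G x))\<^sup>2)"
        using lamq v2p by (simp add: le_divide_eq)
      also have "\<dots> = integral\<^sup>L N v" unfolding N_def by (rule E(5))
      finally show ?thesis using vA by simp
    qed
    have one: "integrable N (\<lambda>x. ((\<lambda>_. 1::real) x)\<^sup>2)"
      unfolding N_def by (simp add: finite_measure.integrable_const[OF fin])
    have measN: "integral\<^sup>L N (\<lambda>x. ((\<lambda>_. 1::real) x)\<^sup>2) = M"
      unfolding N_def M_def using \<Omega>s by (simp add: measure_restrict_space)
    have AM: "A\<^sup>2 \<le> M * integral\<^sup>L N (\<lambda>x. (v x)\<^sup>2)"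
    proof -
      have "A \<le> sqrt (integral\<^sup>L N (\<lambda>x. (v x)\<^sup>2)) * sqrt M"
        using int_cs(2)[OF vm[folded N_def] _ E(2)[folded N_def] one] measN unfolding A_def by simp
      then have "A\<^sup>2 \<le> (sqrt (integral\<^sup>L N (\<lambda>x. (v x)\<^sup>2)) * sqrt M)\<^sup>2"
        using A0 by (simp add: power_mono)
      also have "\<dots> = M * integral\<^sup>L N (\<lambda>x. (v x)\<^sup>2)" using M0 v2p by (simp add: power_mult_distrib)
      finally show ?thesis .
    qed
    have Mp: "M > 0"
    proof -
      have "0 < A\<^sup>2" using Ap by simp
      then have "0 < M * integral\<^sup>L N (\<lambda>x. (v x)\<^sup>2)" using AM by linarith
      then show ?thesis using v2p M0 by (simp add: zero_less_mult_iff)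
    qed
    have key1: "lam * A \<le> M"
    proof -
      have "lam * A\<^sup>2 \<le> lam * (M * integral\<^sup>L N (\<lambda>x. (v x)\<^sup>2))" using AM lam0 by (rule mult_left_mono)
      also have "\<dots> = M * (lam * integral\<^sup>L N (\<lambda>x. (v x)\<^sup>2))" by simp
      also have "\<dots> \<le> M * A" using key0 M0 by (rule mult_left_mono)
      finally have "(lam * A) * A \<le> M * A" by (simp add: power2_eq_square mult_ac)
      then show ?thesis using Ap by simp
    qed
    have F1le: "Fp 1 \<Omega> v \<le> 1" and F1ge: "Fp 1 \<Omega> v \<ge> 0"
      unfolding F1 using key1 Mp lam0 A0 by (simp_all add: divide_le_eq mult.commute)
    have part2: "(Fp 1 \<Omega> v) powr (1 / p) \<le> 1"
      using F1le F1ge p0 by (intro powr_le1) auto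
    show ?thesis
    proof (cases "lam = 0")
      case True then show ?thesis using part2 Fpp by simp
    next
      case False
      then have lamp: "lam > 0" using lam0 by simp
      define \<theta> where "\<theta> = p - 1"
      have t0: "0 \<le> \<theta>" and t1: "\<theta> \<le> 1" using assms(5,6) by (auto simp: \<theta>_def)
      have Bi: "integrable N (\<lambda>x. \<bar>v x\<bar> powr p)"
      proof (rule Bochner_Integration.integrable_bound)
        show "integrable N (\<lambda>x. \<bar>v x\<bar> + (v x)\<^sup>2)" using vabs E(2) unfolding N_def by simp
        show "(\<lambda>x. \<bar>v x\<bar> powr p) \<in> borel_measurable N" unfolding N_def by measurable
        show "AE x in N. norm (\<bar>v x\<bar> powr p) \<le> norm (\<bar>v x\<bar> + (v x)\<^sup>2)"
          using powr_le_lin_sq[of "\<bar>v x\<bar>" p for x] assms(5,6) by (intro AE_I2) simp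
      qed
      have key2: "lam powr \<theta> * B \<le> A"
      proof -
        have "lam powr \<theta> * B = integral\<^sup>L N (\<lambda>x. lam powr \<theta> * \<bar>v x\<bar> powr (1 + \<theta>))"
          unfolding B_def \<theta>_def by simp
        also have "\<dots> \<le> integral\<^sup>L N (\<lambda>x. (1 - \<theta>) * \<bar>v x\<bar> + \<theta> * (lam * (v x)\<^sup>2))"
        proof (rule integral_mono)
          show "integrable N (\<lambda>x. lam powr \<theta> * \<bar>v x\<bar> powr (1 + \<theta>))" using Bi unfolding \<theta>_def by simp
          show "integrable N (\<lambda>x. (1 - \<theta>) * \<bar>v x\<bar> + \<theta> * (lam * (v x)\<^sup>2))" using vabs E(2) unfolding N_def by simp
          fix x show "lam powr \<theta> * \<bar>v x\<bar> powr (1 + \<theta>) \<le> (1 - \<theta>) * \<bar>v x\<bar> + \<theta> * (lam * (v x)\<^sup>2)"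
            using pointwise_young[of "\<bar>v x\<bar>" lam \<theta>] lamp t0 t1 by simp
        qed
        also have "\<dots> = (1 - \<theta>) * A + \<theta> * (lam * integral\<^sup>L N (\<lambda>x. (v x)\<^sup>2))"
          unfolding A_def using vabs E(2) unfolding N_def by simp
        also have "\<dots> \<le> (1 - \<theta>) * A + \<theta> * A" using key0 t0 by (simp add: mult_left_mono)
        finally show ?thesis by (simp add: algebra_simps)
      qed
      have "B powr (1 / p) * lam = (B * lam powr p) powr (1 / p)"
        using lamp B0 p0 by (simp add: powr_mult powr_powr)
      also have "\<dots> \<le> (A * lam) powr (1 / p)"
      proof (rule powr_mono2)
        show "0 \<le> 1 / p" using p0 by simp
        show "0 \<le> B * lam powr p" using B0 by simp
        have "B * lam powr p = lam * (lam powr \<theta> * B)"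
          using lamp by (simp add: \<theta>_def powr_add[symmetric] powr_diff) 
        also have "\<dots> \<le> lam * A" using key2 lam0 by (rule mult_left_mono)
        finally show "B * lam powr p \<le> A * lam" by (simp add: mult_ac)
      qed
      finally have "B powr (1 / p) * lam / M powr (1 / p) \<le> (A * lam) powr (1 / p) / M powr (1 / p)"
        using Mp by (simp add: divide_right_mono)
      also have "\<dots> = (Fp 1 \<Omega> v) powr (1 / p)" unfolding F1 by (simp add: powr_divide)
      finally show ?thesis using part2 Fpp by simp
    qed
  qed
qed

end
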